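(* Let $1<q<2$ and let $(\mathbf{y}_{(p)})_{p\ge0}$ be generated by the $q$PWAWS iteration (see context) from an arbitrary starting point $\mathbf{y}_{(0)}\in\mathbb{R}^d$. If $\mathbf{y}_{(p)}\ne\mathbf{M}$ for all $p$, then $\mathbf{y}_{(p)}\to\mathbf{M}$ as $p\to\infty$. If some $\mathbf{y}_{(p)}=\mathbf{M}$, this is detected: either $\mathbf{y}_{(p)}\notin\{\mathbf{x}_i\}$ and $\mathbf{T}_1(\mathbf{y}_{(p)})=\mathbf{y}_{(p)}$, or $\mathbf{y}_{(p)}=\mathbf{x}_k$ and $\nabla D_q(\mathbf{x}_k)=\mathbf{0}$.
   Context: Let $\mathbf{x}_1,\dots,\mathbf{x}_m\in\mathbb{R}^d$ be distinct data points, not all lying on a common affine line, and $\eta_1,\dots,\eta_m>0$ weights. Let $1<q<2$, $C_q(\mathbf{y})=\sum_{i=1}^m \eta_i^q\|\mathbf{y}-\mathbf{x}_i\|^q$ (Euclidean norm), strictly convex with unique minimizer $\mathbf{M}$. For $\mathbf{y}\notin\{\mathbf{x}_i\}$, $\mathbf{T}_1(\mathbf{y})=\frac{\sum_{i} \eta_i^q\|\mathbf{y}-\mathbf{x}_i\|^{q-2}\mathbf{x}_i}{\sum_{i} \eta_i^q\|\mathbf{y}-\mathbf{x}_i\|^{q-2}}$. For each $k$, $\nabla D_q(\mathbf{x}_k)=\sum_{i\ne k} q\eta_i^q\|\mathbf{x}_k-\mathbf{x}_i\|^{q-2}(\mathbf{x}_k-\mathbf{x}_i)$; $\mathbf{x}_k=\mathbf{M}$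 iff $\nabla D_q(\mathbf{x}_k)=\mathbf{0}$, and if $\nabla D_q(\mathbf{x}_k)\neq\mathbf{0}$ there exist $\lambda>0$ with $C_q(\mathbf{x}_k-\lambda\nabla D_q(\mathbf{x}_k))<C_q(\mathbf{x}_k)$. The $q$PWAWS iteration: if $\mathbf{y}_{(p)}=\mathbf{M}$ the algorithm stops; otherwise, if $\mathbf{y}_{(p)}\notin\{\mathbf{x}_i\}$ set $\mathbf{y}_{(p+1)}=\mathbf{T}_1(\mathbf{y}_{(p)})$, and if $\mathbf{y}_{(p)}=\mathbf{x}_k\neq\mathbf{M}$ set $\mathbf{y}_{(p+1)}=\mathbf{x}_k-\lambda_p\nabla D_q(\mathbf{x}_k)$, where $\lambda_p>0$ is any number with $C_q(\mathbf{x}_k-\lambda_p\nabla D_q(\mathbf{x}_k))<C_q(\mathbf{x}_k)$. *)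

theory Defs
  imports "HOL-Analysis.Analysis"
begin

definition Cq :: "nat \<Rightarrow> real \<Rightarrow> (nat \<Rightarrow> 'a::euclidean_space) \<Rightarrow> (nat \<Rightarrow> real) \<Rightarrow> 'a \<Rightarrow> real" where
  "Cq m q x eta y = (\<Sum>i<m. eta i powr q * norm (y - x i) powr q)"

definition T1 :: "nat \<Rightarrow> real \<Rightarrow> (nat \<Rightarrow> 'a::euclidean_space) \<Rightarrow> (nat \<Rightarrow> real) \<Rightarrow> 'a \<Rightarrow> 'a" where
  "T1 m q x eta y =
     (1 / (\<Sum>i<m. eta i powr q * norm (y - x i) powr (q - 2))) *\<^sub>R
     (\<Sum>i<m. (eta i powr q * norm (y - x i) powr (q - 2)) *\<^sub>R x i)"

definition gradDq :: "nat \<Rightarrow> real \<Rightarrow> (nat \<Rightarrow> 'a::euclidean_space) \<Rightarrow> (nat \<Rightarrow> real) \<Rightarrow> nat \<Rightarrow> 'a" where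
  "gradDq m q x eta k =
     (\<Sum>i\<in>{..<m} - {k}. (q * eta i powr q * norm (x k - x i) powr (q - 2)) *\<^sub>R (x k - x i))"

definition qpwaws_step :: "nat \<Rightarrow> real \<Rightarrow> (nat \<Rightarrow> 'a::euclidean_space) \<Rightarrow> (nat \<Rightarrow> real) \<Rightarrow> 'a \<Rightarrow> 'a \<Rightarrow> bool" where
  "qpwaws_step m q x eta y y' \<longleftrightarrow>
     (y \<notin> x ` {..<m} \<longrightarrow> y' = T1 m q x eta y) \<and>
     (\<forall>k<m. y = x k \<longrightarrow>
        (\<exists>lam>0. y' = x k - lam *\<^sub>R gradDq m q x eta k \<and> Cq m q x eta y' < Cq m q x eta (x k)))"

end

theory Submission
  imports Defs "HOL-Analysis.Analysis"
begin

lemma bern_strict: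
  fixes q u :: real
  assumes q: "1 < q" and u: "0 \<le> u" "u \<noteq> 1"
  shows "1 + q * (u - 1) < u powr q"
proof -
  consider "u = 0" | "0 < u" "u < 1" | "1 < u" using u by linarith
  then show ?thesis
  proof cases
    case 1 then show ?thesis using q by simp
  next
    case 2
    have "(\<lambda>t. t powr q - q * t) u > (\<lambda>t. t powr q - q * t) 1"
    proof (rule DERIV_neg_imp_decreasing_open[OF \<open>u < 1\<close>])
      fix t assume t: "u < t" "t < 1"
      have "t powr (q - 1) < 1" using t 2 q powr_less_mono2[of "q - 1" t 1] by simp
      then show "\<exists>y. ((\<lambda>t. t powr q - q * t) has_real_derivative y) (at t) \<and> y < 0"
        using t 2 q by (intro exI[of _ "q * t powr (q - 1) - q"] conjI)
          (auto intro!: derivative_eq_intros)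
    next
      show "continuous_on {u..1} (\<lambda>t. t powr q - q * t)"
        using 2 by (intro continuous_intros) auto
    qed
    then show ?thesis by (simp add: algebra_simps)
  next
    case 3
    have "(\<lambda>t. t powr q - q * t) 1 < (\<lambda>t. t powr q - q * t) u"
    proof (rule DERIV_pos_imp_increasing_open[OF \<open>1 < u\<close>])
      fix t assume t: "1 < t" "t < u"
      have "1 < t powr (q - 1)" using t q by (simp add: gr_one_powr)
      then show "\<exists>y. ((\<lambda>t. t powr q - q * t) has_real_derivative y) (at t) \<and> y > 0"
        using t q by (intro exI[of _ "q * t powr (q - 1) - q"] conjI)
          (auto intro!: derivative_eq_intros)
    next
      show "continuous_on {1..u} (\<lambda>t. t powr q - q * t)"
        by (intro continuous_intros) auto
    qed
    then show ?thesis by (simp add: algebra_simps)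
  qed
qed

lemma bern:
  fixes q u :: real
  assumes q: "1 < q" and u: "0 \<le> u"
  shows "1 + q * (u - 1) \<le> u powr q"
  using bern_strict[OF q u] by (cases "u = 1") auto

lemma tangent:
  fixes q s c :: real
  assumes q: "1 < q" and c: "0 < c" and s: "0 \<le> s"
  shows "c powr q + q * c powr (q - 1) * (s - c) \<le> s powr q"
    and "s \<noteq> c \<Longrightarrow> c powr q + q * c powr (q - 1) * (s - c) < s powr q"
proof -
  have e: "s powr q = c powr q * (s / c) powr q" using c s by (simp add: powr_divide)
  have e2: "c powr q + q * c powr (q - 1) * (s - c) = c powr q * (1 + q * (s / c - 1))"
    using c by (simp add: powr_diff field_simps)
  have cq: "0 < c powr q" using c by simp
  show "c powr q + q * c powr (q - 1) * (s - c) \<le> s powr q"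
    unfolding e e2 using bern[OF q, of "s/c"] c s cq by (intro mult_left_mono) auto
  assume "s \<noteq> c"
  then have "s / c \<noteq> 1" using c by auto
  then show "c powr q + q * c powr (q - 1) * (s - c) < s powr q"
    unfolding e e2 using bern_strict[OF q, of "s/c"] c s cq by (intro mult_strict_left_mono) auto
qed



lemma conv_pow:
  fixes q s t l :: real
  assumes q: "1 < q" and st: "0 \<le> s" "0 \<le> t" and l: "0 \<le> l" "l \<le> 1"
  shows "((1 - l) * s + l * t) powr q \<le> (1 - l) * s powr q + l * t powr q"
    and "s \<noteq> t \<Longrightarrow> 0 < l \<Longrightarrow> l < 1 \<Longrightarrow> ((1 - l) * s + l * t) powr q < (1 - l) * s powr q + l * t powr q"
proof -
  define c where "c = (1 - l) * s + l * t"
  have c0: "0 \<le> c" using st l unfolding c_def by simp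
  have key: "(1 - l) * (c powr q + q * c powr (q - 1) * (s - c)) + l * (c powr q + q * c powr (q - 1) * (t - c)) = c powr q"
    unfolding c_def by (simp add: algebra_simps)
  show "((1 - l) * s + l * t) powr q \<le> (1 - l) * s powr q + l * t powr q"
  proof (cases "c = 0")
    case True then show ?thesis using st l unfolding c_def by simp
  next
    case False
    then have cp: "0 < c" using c0 by simp
    have "(1 - l) * (c powr q + q * c powr (q - 1) * (s - c)) \<le> (1 - l) * s powr q"
      using tangent(1)[OF q cp st(1)] l by (intro mult_left_mono) auto
    moreover have "l * (c powr q + q * c powr (q - 1) * (t - c)) \<le> l * t powr q"
      using tangent(1)[OF q cp st(2)] l by (intro mult_left_mono) auto
    ultimately show ?thesis using key unfolding c_def by linarith
  qed
  assume ne: "s \<noteq> t" and l': "0 < l" "l < 1"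
  have cp: "0 < c"
  proof -
    have "0 < s \<or> 0 < t" using ne st by auto
    then show ?thesis using st l' unfolding c_def
      by (smt (verit) mult_nonneg_nonneg mult_pos_pos)
  qed
  have "s \<noteq> c \<or> t \<noteq> c"
  proof (rule ccontr)
    assume "\<not> ?thesis"
    then have "s = c" "t = c" by auto
    then show False using ne by simp
  qed
  then show "((1 - l) * s + l * t) powr q < (1 - l) * s powr q + l * t powr q"
  proof
    assume sc: "s \<noteq> c"
    have "(1 - l) * (c powr q + q * c powr (q - 1) * (s - c)) < (1 - l) * s powr q"
      using tangent(2)[OF q cp st(1) sc] l' by (intro mult_strict_left_mono) auto
    moreover have "l * (c powr q + q * c powr (q - 1) * (t - c)) \<le> l * t powr q"
      using tangent(1)[OF q cp st(2)] l' by (intro mult_left_mono) auto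
    ultimately show ?thesis using key unfolding c_def by linarith
  next
    assume sc: "t \<noteq> c"
    have "(1 - l) * (c powr q + q * c powr (q - 1) * (s - c)) \<le> (1 - l) * s powr q"
      using tangent(1)[OF q cp st(1)] l' by (intro mult_left_mono) auto
    moreover have "l * (c powr q + q * c powr (q - 1) * (t - c)) < l * t powr q"
      using tangent(2)[OF q cp st(2) sc] l' by (intro mult_strict_left_mono) auto
    ultimately show ?thesis using key unfolding c_def by linarith
  qed
qed

lemma conv_norm_pow:
  fixes a b :: "'a::real_inner" and q l :: real
  assumes q: "1 < q" and l: "0 \<le> l" "l \<le> 1"
  shows "norm ((1 - l) *\<^sub>R a + l *\<^sub>R b) powr q \<le> (1 - l) * norm a powr q + l * norm b powr q"
proof -
  have "norm ((1 - l) *\<^sub>R a + l *\<^sub>R b) \<le> (1 - l) * norm a + l * norm b"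
    using norm_triangle_ineq[of "(1 - l) *\<^sub>R a" "l *\<^sub>R b"] l by simp
  then have "norm ((1 - l) *\<^sub>R a + l *\<^sub>R b) powr q \<le> ((1 - l) * norm a + l * norm b) powr q"
    using q by (intro powr_mono2) auto
  also have "\<dots> \<le> (1 - l) * norm a powr q + l * norm b powr q"
    using conv_pow(1)[OF q _ _ l] by simp
  finally show ?thesis .
qed

lemma strict_norm_pow:
  fixes a b :: "'a::real_inner" and q :: real
  assumes q: "1 < q" and ne: "a \<noteq> b"
  shows "norm ((1/2) *\<^sub>R a + (1/2) *\<^sub>R b) powr q < (1/2) * norm a powr q + (1/2) * norm b powr q"
proof (cases "norm a = norm b")
  case True
  have "norm (a + b)^2 + norm (a - b)^2 = 2 * norm a ^2 + 2 * norm b ^2"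
    by (simp add: power2_norm_eq_inner inner_add_left inner_add_right inner_diff_left inner_diff_right inner_commute)
  moreover have "0 < norm (a - b)^2" using ne by simp
  moreover have "norm a ^2 = norm b ^2" using True by simp
  ultimately have "norm (a + b)^2 < 4 * norm a ^2" by linarith
  then have "norm (a + b)^2 < (2 * norm a)^2" by (simp add: power_mult_distrib)
  then have "norm (a + b) < 2 * norm a" by (smt (verit) norm_ge_zero power_mono)
  then have lt: "norm ((1/2) *\<^sub>R a + (1/2) *\<^sub>R b) < norm a"
    by (simp add: scaleR_right_distrib[symmetric])
  have "norm ((1/2) *\<^sub>R a + (1/2) *\<^sub>R b) powr q < norm a powr q"
    using q lt by (intro powr_less_mono2) auto
  then show ?thesis using True by simp
next
  case False
  have "norm ((1/2) *\<^sub>R a + (1/2) *\<^sub>R b) \<le> (1/2) * norm a + (1/2) * norm b"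
    using norm_triangle_ineq[of "(1/2) *\<^sub>R a" "(1/2) *\<^sub>R b"] by simp
  then have "norm ((1/2) *\<^sub>R a + (1/2) *\<^sub>R b) powr q \<le> ((1 - 1/2) * norm a + (1/2) * norm b) powr q"
    using q by (intro powr_mono2) auto
  also have "\<dots> < (1 - 1/2) * norm a powr q + (1/2) * norm b powr q"
    using conv_pow(2)[OF q _ _ _ _ False, of "1/2"] by simp
  finally show ?thesis by simp
qed

lemma concave_tangent:
  fixes p s t :: real
  assumes p: "0 < p" "p < 1" and s: "0 \<le> s" and t: "0 < t"
  shows "s powr p \<le> t powr p + p * t powr (p - 1) * (s - t)"
proof (cases "s = 0")
  case True
  have "t powr p = t * t powr (p - 1)" using t by (simp add: powr_diff)
  then have "t powr p + p * t powr (p - 1) * (s - t) = (1 - p) * t powr p" using True by (simp add: algebra_simps)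
  then show ?thesis using True p t by simp
next
  case False
  then have sp: "0 < s" using s by simp
  have "s powr p * t powr (1 - p) \<le> p * s + (1 - p) * t"
    using Youngs_inequality_0[of p "1 - p" s t] p sp t by simp
  then have "s powr p * t powr (1 - p) * t powr (p - 1) \<le> (p * s + (1 - p) * t) * t powr (p - 1)"
    using t by (intro mult_right_mono) auto
  moreover have "t powr (1 - p) * t powr (p - 1) = 1" using t by (simp add: powr_add[symmetric])
  moreover have "t powr p = t * t powr (p - 1)" using t by (simp add: powr_diff)
  ultimately show ?thesis by (simp add: algebra_simps)
qed



locale qp =
  fixes m :: nat and q :: real and x :: "nat \<Rightarrow> 'a::euclidean_space" and eta :: "nat \<Rightarrow> real"
  assumes q1: "1 < q" and q2: "q < 2" and inj: "inj_on x {..<m}"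
    and eta_pos: "\<And>i. i < m \<Longrightarrow> 0 < eta i" and m_pos: "0 < m"
begin

abbreviation C where "C \<equiv> Cq m q x eta"
abbreviation T where "T \<equiv> T1 m q x eta"
definition w where "w i y = eta i powr q * norm (y - x i) powr (q - 2)"
definition W where "W y = (\<Sum>i<m. w i y)"
definition G where "G z = (\<Sum>i\<in>{i. i<m \<and> z \<noteq> x i}. (q * w i z) *\<^sub>R (z - x i))"
abbreviation data where "data \<equiv> x ` {..<m}"

lemma C_convex:
  assumes t: "0 \<le> t" "t \<le> 1"
  shows "C (z + t *\<^sub>R d) \<le> (1 - t) * C z + t * C (z + d)"
proof -
  have "C (z + t *\<^sub>R d) \<le> (\<Sum>i<m. eta i powr q * ((1 - t) * norm (z - x i) powr q + t * norm (z + d - x i) powr q))"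
    unfolding Cq_def
  proof (rule sum_mono)
    fix i assume "i \<in> {..<m}"
    have e: "z + t *\<^sub>R d - x i = (1 - t) *\<^sub>R (z - x i) + t *\<^sub>R (z + d - x i)"
      by (simp add: algebra_simps)
    show "eta i powr q * norm (z + t *\<^sub>R d - x i) powr q
          \<le> eta i powr q * ((1 - t) * norm (z - x i) powr q + t * norm (z + d - x i) powr q)"
      unfolding e by (intro mult_left_mono conv_norm_pow q1 t) auto
  qed
  also have "\<dots> = (1 - t) * C z + t * C (z + d)"
    unfolding Cq_def sum_distrib_left sum.distrib[symmetric] by (intro sum.cong) (auto simp: algebra_simps)
  finally show ?thesis .
qed

lemma C_strict:
  assumes "a \<noteq> b"
  shows "C ((1/2) *\<^sub>R a + (1/2) *\<^sub>R b) < (1/2) * C a + (1/2) * C b"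
proof -
  have "C ((1/2) *\<^sub>R a + (1/2) *\<^sub>R b) < (\<Sum>i<m. eta i powr q * ((1/2) * norm (a - x i) powr q + (1/2) * norm (b - x i) powr q))"
    unfolding Cq_def
  proof (rule sum_strict_mono_ex1)
    have h: "\<And>v::'a. (1/2) *\<^sub>R v + (1/2) *\<^sub>R v = v"
      by (simp add: scaleR_add_left[symmetric])
    have e: "\<And>i. (1/2) *\<^sub>R a + (1/2) *\<^sub>R b - x i = (1 - 1/2) *\<^sub>R (a - x i) + (1/2) *\<^sub>R (b - x i)"
      by (simp add: algebra_simps h)
    show "\<forall>i\<in>{..<m}. eta i powr q * norm ((1/2) *\<^sub>R a + (1/2) *\<^sub>R b - x i) powr q
          \<le> eta i powr q * ((1/2) * norm (a - x i) powr q + (1/2) * norm (b - x i) powr q)"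
      using conv_norm_pow[OF q1, of "1/2"] unfolding e by (intro ballI mult_left_mono) auto
    have e2: "(1/2) *\<^sub>R a + (1/2) *\<^sub>R b - x 0 = (1/2) *\<^sub>R (a - x 0) + (1/2) *\<^sub>R (b - x 0)"
      using e[of 0] by simp
    have "a - x 0 \<noteq> b - x 0" using assms by simp
    then have "norm ((1/2) *\<^sub>R a + (1/2) *\<^sub>R b - x 0) powr q < (1/2) * norm (a - x 0) powr q + (1/2) * norm (b - x 0) powr q"
      unfolding e2 by (rule strict_norm_pow[OF q1])
    moreover have "0 < eta 0 powr q" using eta_pos[OF m_pos] by simp
    ultimately show "\<exists>i\<in>{..<m}. eta i powr q * norm ((1/2) *\<^sub>R a + (1/2) *\<^sub>R b - x i) powr q
          < eta i powr q * ((1/2) * norm (a - x i) powr q + (1/2) * norm (b - x i) powr q)"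
      using m_pos by (intro bexI[of _ 0] mult_strict_left_mono) auto
  qed simp
  also have "\<dots> = (1/2) * C a + (1/2) * C b"
    unfolding Cq_def sum_distrib_left sum.distrib[symmetric] by (intro sum.cong) (auto simp: algebra_simps)
  finally show ?thesis .
qed

lemma min_unique:
  assumes M: "\<forall>z. C M \<le> C z" and z: "C z \<le> C M"
  shows "z = M"
proof (rule ccontr)
  assume "z \<noteq> M"
  then have "C ((1/2) *\<^sub>R z + (1/2) *\<^sub>R M) < (1/2) * C z + (1/2) * C M" by (rule C_strict)
  also have "\<dots> \<le> C M" using z by simp
  finally show False using M by (meson not_le)
qed

lemma w_pos: "i < m \<Longrightarrow> y \<noteq> x i \<Longrightarrow> 0 < w i y"
proof -
  assume "i < m" "y \<noteq> x i"
  then have "eta i \<noteq> 0" "norm (y - x i) \<noteq> 0" using eta_pos[of i] by auto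
  then show ?thesis unfolding w_def by simp
qed

lemma w_nonneg: "i < m \<Longrightarrow> 0 \<le> w i y"
  unfolding w_def using eta_pos by simp

lemma W_pos: "z \<notin> data \<Longrightarrow> 0 < W z"
  unfolding W_def using m_pos w_pos by (intro sum_pos) auto

lemma sum_wx: "z \<notin> data \<Longrightarrow> (\<Sum>i<m. w i z *\<^sub>R (z - x i)) = W z *\<^sub>R (z - T z)"
proof -
  assume z: "z \<notin> data"
  have "T z = (1 / W z) *\<^sub>R (\<Sum>i<m. w i z *\<^sub>R x i)"
    unfolding T1_def W_def w_def by simp
  then have "W z *\<^sub>R T z = (\<Sum>i<m. w i z *\<^sub>R x i)" using W_pos[OF z] by simp
  then show ?thesis
    by (simp add: scaleR_diff_right sum_subtractf W_def scaleR_sum_left)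
qed

lemma G_T: "z \<notin> data \<Longrightarrow> G z = (q * W z) *\<^sub>R (z - T z)"
proof -
  assume z: "z \<notin> data"
  have "{i. i<m \<and> z \<noteq> x i} = {..<m}" using z by auto
  then have "G z = q *\<^sub>R (\<Sum>i<m. w i z *\<^sub>R (z - x i))"
    unfolding G_def by (simp add: scaleR_sum_right)
  then show ?thesis using sum_wx[OF z] by simp
qed

lemma gradDq_G: "k < m \<Longrightarrow> gradDq m q x eta k = G (x k)"
proof -
  assume k: "k < m"
  have "{..<m} - {k} = {i. i<m \<and> x k \<noteq> x i}"
    using inj k by (auto dest: inj_onD)
  then show ?thesis unfolding gradDq_def G_def w_def by (simp add: mult.assoc)
qed

end


lemma dd_ne:
  fixes v d :: "'a::real_inner" and q :: real
  assumes v: "v \<noteq> 0"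
  shows "((\<lambda>t. (norm (v + t *\<^sub>R d) powr q - norm v powr q) / t)
           \<longlongrightarrow> q * norm v powr (q - 2) * (v \<bullet> d)) (at_right 0)"
proof -
  have d1: "((\<lambda>t. v + t *\<^sub>R d) has_derivative (\<lambda>h. h *\<^sub>R d)) (at 0)"
    by (auto intro!: derivative_eq_intros)
  have d2: "(norm has_derivative (\<lambda>h. h \<bullet> sgn v)) (at (v + 0 *\<^sub>R d))"
    using has_derivative_norm[OF v] by simp
  have d3: "((\<lambda>t. norm (v + t *\<^sub>R d)) has_derivative (\<lambda>h. (h *\<^sub>R d) \<bullet> sgn v)) (at 0)"
    using has_derivative_compose[OF d1 d2] by simp
  have e: "(\<lambda>h. (h *\<^sub>R d) \<bullet> sgn v) = (\<lambda>h. (d \<bullet> sgn v) * h)"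
    by (auto simp: fun_eq_iff)
  have d4: "((\<lambda>t. norm (v + t *\<^sub>R d)) has_real_derivative (d \<bullet> sgn v)) (at 0)"
    unfolding has_field_derivative_def using d3 unfolding e by simp
  have d5: "((\<lambda>t. norm (v + t *\<^sub>R d) powr q) has_real_derivative
       q * norm (v + 0 *\<^sub>R d) powr (q - of_nat 1) * (d \<bullet> sgn v)) (at 0)"
    by (rule DERIV_fun_powr[OF d4]) (use v in simp)
  have val: "q * norm (v + 0 *\<^sub>R d) powr (q - of_nat 1) * (d \<bullet> sgn v) = q * norm v powr (q - 2) * (v \<bullet> d)"
  proof -
    have "norm v powr (q - 1) = norm v powr ((q - 2) + 1)" by simp
    also have "\<dots> = norm v powr (q - 2) * norm v powr 1" by (rule powr_add)
    finally have "norm v powr (q - 1) = norm v powr (q - 2) * norm v" using v by simp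
    moreover have "d \<bullet> sgn v = (v \<bullet> d) / norm v"
      by (simp add: sgn_div_norm inner_commute divide_inverse mult.commute)
    ultimately show ?thesis using v by simp
  qed
  have "((\<lambda>y. (norm (v + y *\<^sub>R d) powr q - norm (v + 0 *\<^sub>R d) powr q) / (y - 0))
         \<longlongrightarrow> q * norm v powr (q - 2) * (v \<bullet> d)) (at 0)"
    using d5 unfolding val has_field_derivative_iff .
  then have "((\<lambda>t. (norm (v + t *\<^sub>R d) powr q - norm v powr q) / t)
           \<longlongrightarrow> q * norm v powr (q - 2) * (v \<bullet> d)) (at 0)" by simp
  then show ?thesis by (rule tendsto_mono[OF at_le, rotated]) simp
qed

lemma dd_eq:
  fixes d :: "'a::real_normed_vector" and q :: real
  assumes q: "1 < q"
  shows "((\<lambda>t. (norm (0 + t *\<^sub>R d) powr q - norm (0::'a) powr q) / t) \<longlongrightarrow> 0) (at_right 0)"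
proof -
  have "((\<lambda>t::real. t powr (q - 1)) \<longlongrightarrow> 0) (at_right 0)"
    using q by (intro tendsto_zero_powrI[of _ _ _ "q - 1"])
      (auto intro!: tendsto_intros simp: eventually_at_right_less eventually_mono[OF eventually_at_right_less])
  note l0 = this
  have lim: "((\<lambda>t::real. t powr (q - 1) * norm d powr q) \<longlongrightarrow> 0) (at_right 0)"
    using tendsto_mult[OF l0 tendsto_const[of "norm d powr q"]] by simp
  have "\<forall>\<^sub>F t in at_right 0. t powr (q - 1) * norm d powr q = (norm (0 + t *\<^sub>R d) powr q - norm (0::'a) powr q) / t"
  proof (rule eventually_mono[OF eventually_at_right_less])
    fix t :: real assume t: "0 < t"
    have "t powr (q - 1) = t powr q / t" using t by (simp add: powr_diff)
    then show "t powr (q - 1) * norm d powr q = (norm (0 + t *\<^sub>R d) powr q - norm (0::'a) powr q) / t"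
      using t by (simp add: powr_mult)
  qed
  then show ?thesis using lim by (rule Lim_transform_eventually[rotated])
qed

context qp begin

lemma DD: "((\<lambda>t. (C (z + t *\<^sub>R d) - C z) / t) \<longlongrightarrow> G z \<bullet> d) (at_right 0)"
proof -
  define L where "L i = eta i powr q * (if z = x i then 0 else q * norm (z - x i) powr (q - 2) * ((z - x i) \<bullet> d))" for i
  have eq: "(C (z + t *\<^sub>R d) - C z) / t =
      (\<Sum>i<m. eta i powr q * ((norm ((z - x i) + t *\<^sub>R d) powr q - norm (z - x i) powr q) / t))" for t
  proof -
    have "\<And>i. z + t *\<^sub>R d - x i = (z - x i) + t *\<^sub>R d" by (simp add: algebra_simps)
    then show ?thesis unfolding Cq_def
      by (simp add: sum_subtractf[symmetric] sum_divide_distrib algebra_simps diff_divide_distrib)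
  qed
  have lim: "((\<lambda>t. \<Sum>i<m. eta i powr q * ((norm ((z - x i) + t *\<^sub>R d) powr q - norm (z - x i) powr q) / t))
      \<longlongrightarrow> (\<Sum>i<m. L i)) (at_right 0)"
    unfolding L_def
  proof (rule tendsto_sum, rule tendsto_mult_left)
    fix i
    show "((\<lambda>t. (norm ((z - x i) + t *\<^sub>R d) powr q - norm (z - x i) powr q) / t)
      \<longlongrightarrow> (if z = x i then 0 else q * norm (z - x i) powr (q - 2) * ((z - x i) \<bullet> d))) (at_right 0)"
    proof (cases "z = x i")
      case True then show ?thesis using dd_eq[OF q1, of d] by simp
    next
      case False then show ?thesis using dd_ne[of "z - x i" d q] by simp
    qed
  qed
  have "(\<Sum>i<m. L i) = G z \<bullet> d"
  proof -
    have "G z \<bullet> d = (\<Sum>i\<in>{i\<in>{..<m}. z \<noteq> x i}. (q * w i z) * ((z - x i) \<bullet> d))"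
      unfolding G_def by (simp add: inner_sum_left)
    also have "\<dots> = (\<Sum>i<m. if z \<noteq> x i then (q * w i z) * ((z - x i) \<bullet> d) else 0)"
      by (rule sum.inter_filter) simp
    also have "\<dots> = (\<Sum>i<m. L i)"
      by (rule sum.cong) (auto simp: L_def w_def)
    finally show ?thesis by simp
  qed
  then show ?thesis using lim unfolding eq by simp
qed

lemma min_imp_G0:
  assumes "\<forall>y. C z \<le> C y"
  shows "G z = 0"
proof -
  have lim: "((\<lambda>t. (C (z + t *\<^sub>R (- G z)) - C z) / t) \<longlongrightarrow> G z \<bullet> (- G z)) (at_right 0)"
    by (rule DD)
  have "0 \<le> G z \<bullet> (- G z)"
  proof (rule tendsto_lowerbound[OF lim])
    show "\<forall>\<^sub>F t in at_right 0. 0 \<le> (C (z + t *\<^sub>R (- G z)) - C z) / t"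
      using assms by (intro eventually_mono[OF eventually_at_right_less]) simp
  qed simp
  then have "G z \<bullet> G z \<le> 0" by simp
  then have "G z \<bullet> G z = 0" using inner_ge_zero[of "G z"] by linarith
  then show ?thesis by simp
qed

lemma G0_imp_min:
  assumes "G z = 0"
  shows "C z \<le> C y"
proof -
  have lim: "((\<lambda>t. (C (z + t *\<^sub>R (y - z)) - C z) / t) \<longlongrightarrow> G z \<bullet> (y - z)) (at_right 0)"
    by (rule DD)
  have "G z \<bullet> (y - z) \<le> C y - C z"
  proof (rule tendsto_upperbound[OF lim])
    show "\<forall>\<^sub>F t in at_right 0. (C (z + t *\<^sub>R (y - z)) - C z) / t \<le> C y - C z"
    proof (rule eventually_mono[OF eventually_at_right_real[of 0 1]])
      fix t :: real assume t: "t \<in> {0<..<1}"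
      have "C (z + t *\<^sub>R (y - z)) \<le> (1 - t) * C z + t * C (z + (y - z))"
        using t by (intro C_convex) auto
      then have "C (z + t *\<^sub>R (y - z)) - C z \<le> t * (C y - C z)" by (simp add: algebra_simps)
      then show "(C (z + t *\<^sub>R (y - z)) - C z) / t \<le> C y - C z"
        using t by (simp add: divide_le_eq mult.commute)
    qed simp
  qed simp
  then show ?thesis using assms by simp
qed

end


lemma sq_powr: "0 \<le> (a::real) \<Longrightarrow> (a^2) powr p = a powr (2 * p)"
proof (cases "a = 0")
  case False
  assume "0 \<le> a"
  then have "0 < a" using False by simp
  then have "a^2 = a powr (real 2)" by (simp add: powr_realpow)
  then show ?thesis by (simp add: powr_powr)
qed simp

lemma term_ineq:
  fixes a b q :: real
  assumes q: "1 < q" "q < 2" and a: "0 \<le> a" and b: "0 < b"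
  shows "a powr q \<le> b powr q + (q/2) * b powr (q - 2) * (a^2 - b^2)"
proof -
  have "(a^2) powr (q/2) \<le> (b^2) powr (q/2) + (q/2) * (b^2) powr (q/2 - 1) * (a^2 - b^2)"
    using q b by (intro concave_tangent) auto
  moreover have "(a^2) powr (q/2) = a powr q" using a sq_powr[OF a] by simp
  moreover have "(b^2) powr (q/2) = b powr q" using b sq_powr[of b] by simp
  moreover have "(b^2) powr (q/2 - 1) = b powr (q - 2)" using b sq_powr[of b] by (simp add: algebra_simps)
  ultimately show ?thesis by simp
qed

lemma sq_lem: "norm ((a::'a::real_inner) + b)^2 - norm b^2 = norm a^2 + 2 * (a \<bullet> b)"
  by (simp add: power2_norm_eq_inner inner_add_left inner_add_right inner_commute)

context qp begin

lemma WT: "y \<notin> data \<Longrightarrow> W y *\<^sub>R T y = (\<Sum>i<m. w i y *\<^sub>R x i)"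
proof -
  assume z: "y \<notin> data"
  have "T y = (1 / W y) *\<^sub>R (\<Sum>i<m. w i y *\<^sub>R x i)"
    unfolding T1_def W_def w_def by simp
  then show ?thesis using W_pos[OF z] by simp
qed

lemma descent:
  assumes z: "z \<notin> data"
  shows "C (T z) \<le> C z - q/2 * W z * norm (z - T z)^2"
proof -
  have b: "\<And>i. i < m \<Longrightarrow> 0 < norm (z - x i)" using z by auto
  have "C (T z) \<le> (\<Sum>i<m. eta i powr q * norm (z - x i) powr q + (q/2) * (w i z * (norm (T z - x i)^2 - norm (z - x i)^2)))"
    unfolding Cq_def
  proof (rule sum_mono)
    fix i assume i: "i \<in> {..<m}"
    have "norm (T z - x i) powr q \<le> norm (z - x i) powr q + (q/2) * norm (z - x i) powr (q - 2) * (norm (T z - x i)^2 - norm (z - x i)^2)"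
      using term_ineq[OF q1 q2 norm_ge_zero b] i by auto
    then have "eta i powr q * norm (T z - x i) powr q \<le> eta i powr q * (norm (z - x i) powr q + (q/2) * norm (z - x i) powr (q - 2) * (norm (T z - x i)^2 - norm (z - x i)^2))"
      by (intro mult_left_mono) auto
    then show "eta i powr q * norm (T z - x i) powr q \<le> eta i powr q * norm (z - x i) powr q + (q/2) * (w i z * (norm (T z - x i)^2 - norm (z - x i)^2))"
      unfolding w_def by (simp add: algebra_simps)
  qed
  also have "\<dots> = C z + (q/2) * (\<Sum>i<m. w i z * (norm (T z - x i)^2 - norm (z - x i)^2))"
    unfolding Cq_def by (simp add: sum.distrib sum_distrib_left)
  also have "(\<Sum>i<m. w i z * (norm (T z - x i)^2 - norm (z - x i)^2)) = - W z * norm (z - T z)^2"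
  proof -
    have e: "\<And>i. norm (T z - x i)^2 - norm (z - x i)^2 = norm (T z - z)^2 + 2 * ((T z - z) \<bullet> (z - x i))"
      using sq_lem[of "T z - z" "z - x _"] by simp
    have "(\<Sum>i<m. w i z * (norm (T z - x i)^2 - norm (z - x i)^2))
        = W z * norm (T z - z)^2 + 2 * ((T z - z) \<bullet> (\<Sum>i<m. w i z *\<^sub>R (z - x i)))"
    proof -
      have "(\<Sum>i<m. w i z * (norm (T z - x i)^2 - norm (z - x i)^2))
         = (\<Sum>i<m. w i z * norm (T z - z)^2 + 2 * ((T z - z) \<bullet> (w i z *\<^sub>R (z - x i))))"
        unfolding e by (intro sum.cong) (auto simp: algebra_simps)
      also have "\<dots> = W z * norm (T z - z)^2 + 2 * ((T z - z) \<bullet> (\<Sum>i<m. w i z *\<^sub>R (z - x i)))"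
        unfolding W_def by (simp only: sum.distrib sum_distrib_right[symmetric] sum_distrib_left[symmetric] inner_sum_right)
      finally show ?thesis .
    qed
    also have "\<dots> = W z * norm (T z - z)^2 + 2 * ((T z - z) \<bullet> (W z *\<^sub>R (z - T z)))"
      using sum_wx[OF z] by simp
    also have "\<dots> = - W z * norm (z - T z)^2"
      by (simp add: power2_norm_eq_inner algebra_simps inner_commute)
    finally show ?thesis .
  qed
  finally show ?thesis by simp
qed

end

context qp begin

lemma C_cont: "continuous_on UNIV C"
proof -
  have c: "\<And>i. continuous_on UNIV (\<lambda>y. norm (y - x i) powr q)"
    by (rule continuous_on_powr') (use q1 in \<open>auto intro!: continuous_intros\<close>)
  show ?thesis unfolding Cq_def by (intro continuous_on_sum continuous_on_mult_left c)
qed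

lemma T_cont: "continuous_on (- data) T"
proof -
  have c: "\<And>i. i < m \<Longrightarrow> continuous_on (- data) (\<lambda>y. norm (y - x i) powr (q - 2))"
    by (rule continuous_on_powr') (auto intro!: continuous_intros)
  have cs: "continuous_on (- data) (\<lambda>y. \<Sum>i<m. eta i powr q * norm (y - x i) powr (q - 2))"
    by (intro continuous_on_sum continuous_on_mult_left c) auto
  have cv: "continuous_on (- data) (\<lambda>y. \<Sum>i<m. (eta i powr q * norm (y - x i) powr (q - 2)) *\<^sub>R x i)"
    by (intro continuous_on_sum continuous_on_scaleR continuous_on_mult_left c continuous_on_const) auto
  have pos: "\<And>y. y \<in> - data \<Longrightarrow> (\<Sum>i<m. eta i powr q * norm (y - x i) powr (q - 2)) \<noteq> 0"
  proof -
    fix y assume "y \<in> - data"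
    then have "0 < W y" by (intro W_pos) simp
    then show "(\<Sum>i<m. eta i powr q * norm (y - x i) powr (q - 2)) \<noteq> 0" unfolding W_def w_def by simp
  qed
  show ?thesis unfolding T1_def
    by (intro continuous_on_scaleR continuous_on_divide continuous_on_const cs cv) (use pos in blast)
qed

end

context qp begin

lemma local_est:
  assumes k: "k < m" and g: "G (x k) \<noteq> 0" and rho: "0 < \<rho>"
  shows "\<exists>\<delta>>0. \<forall>y. y \<notin> data \<and> dist y (x k) < \<delta> \<longrightarrow>
           dist (T y) (x k) < \<rho> \<and> 2 * dist y (x k) < dist (T y) (x k)"
proof -
  define K where "K = {..<m} - {k}"
  define N where "N y = (\<Sum>i\<in>K. w i y *\<^sub>R (x i - x k))" for y
  define S where "S y = (\<Sum>i\<in>K. w i y)" for y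
  define e where "e = eta k powr q"
  have e_pos: "0 < e" unfolding e_def using eta_pos[OF k] by simp
  have xne: "\<And>i. i \<in> K \<Longrightarrow> x i \<noteq> x k" using inj k unfolding K_def by (auto dest: inj_onD)
  have seteq: "{i. i < m \<and> x k \<noteq> x i} = K" using inj k unfolding K_def by (auto dest: inj_onD)
  have NG: "G (x k) = (- q) *\<^sub>R N (x k)"
  proof -
    have "G (x k) = (\<Sum>i\<in>K. (- q) *\<^sub>R (w i (x k) *\<^sub>R (x i - x k)))"
      unfolding G_def seteq by (intro sum.cong) (auto simp: algebra_simps)
    then show ?thesis unfolding N_def by (simp add: scaleR_sum_right)
  qed
  define n0 where "n0 = norm (N (x k))"
  have n0: "0 < n0" unfolding n0_def using g NG by auto
  define S0 where "S0 = S (x k)"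
  have wt: "((\<lambda>y. w i y) \<longlongrightarrow> w i (x k)) (at (x k))" if i: "i \<in> K" for i
  proof -
    have "norm (x k - x i) \<noteq> 0" using xne[OF i] by simp
    then show ?thesis unfolding w_def by (intro tendsto_intros) auto
  qed
  have Nt: "(N \<longlongrightarrow> N (x k)) (at (x k))"
    unfolding N_def by (intro tendsto_sum tendsto_scaleR wt tendsto_const)
  have St: "(S \<longlongrightarrow> S0) (at (x k))"
    unfolding S_def S0_def by (intro tendsto_sum wt)
  have rt: "((\<lambda>y. norm (y - x k)) \<longlongrightarrow> 0) (at (x k))"
  proof -
    have "((\<lambda>y. y - x k) \<longlongrightarrow> x k - x k) (at (x k))" by (intro tendsto_intros)
    from tendsto_norm[OF this] show ?thesis by simp
  qed
  have r1: "((\<lambda>y. norm (y - x k) powr (q - 1)) \<longlongrightarrow> 0) (at (x k))"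
    by (rule tendsto_zero_powrI[OF rt tendsto_const]) (use q1 in auto)
  have r2: "((\<lambda>y. norm (y - x k) powr (2 - q)) \<longlongrightarrow> 0) (at (x k))"
    by (rule tendsto_zero_powrI[OF rt tendsto_const]) (use q2 in auto)
  have ev1: "\<forall>\<^sub>F y in at (x k). n0/2 < norm (N y)"
    using order_tendstoD(1)[OF tendsto_norm[OF Nt], of "n0/2"] n0 unfolding n0_def by linarith
  have ev2: "\<forall>\<^sub>F y in at (x k). norm (N y) < 2 * n0"
    using order_tendstoD(2)[OF tendsto_norm[OF Nt], of "2 * n0"] n0 unfolding n0_def by linarith
  have ev3: "\<forall>\<^sub>F y in at (x k). S y < S0 + 1"
    using order_tendstoD(2)[OF St] by simp
  have ev4: "\<forall>\<^sub>F y in at (x k). norm (y - x k) powr (2 - q) < \<rho> * e / (2 * n0)"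
    using order_tendstoD(2)[OF r2] n0 rho e_pos by simp
  have "((\<lambda>y. 2 * e * norm (y - x k) powr (q - 1) + 2 * (S0 + 1) * norm (y - x k)) \<longlongrightarrow> 2 * e * 0 + 2 * (S0 + 1) * 0) (at (x k))"
    by (intro tendsto_intros r1 rt)
  then have lim5: "((\<lambda>y. 2 * e * norm (y - x k) powr (q - 1) + 2 * (S0 + 1) * norm (y - x k)) \<longlongrightarrow> 0) (at (x k))"
    by simp
  have ev5: "\<forall>\<^sub>F y in at (x k). 2 * e * norm (y - x k) powr (q - 1) + 2 * (S0 + 1) * norm (y - x k) < n0 / 2"
    by (rule order_tendstoD(2)[OF lim5]) (use n0 in simp)
  have "\<forall>\<^sub>F y in at (x k). n0/2 < norm (N y) \<and> norm (N y) < 2 * n0 \<and> S y < S0 + 1 \<and>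
      norm (y - x k) powr (2 - q) < \<rho> * e / (2 * n0) \<and>
      2 * e * norm (y - x k) powr (q - 1) + 2 * (S0 + 1) * norm (y - x k) < n0 / 2"
    by (intro eventually_conj ev1 ev2 ev3 ev4 ev5)
  then obtain d where d: "d > 0" and dP: "\<And>y. y \<noteq> x k \<Longrightarrow> dist y (x k) < d \<Longrightarrow>
      n0/2 < norm (N y) \<and> norm (N y) < 2 * n0 \<and> S y < S0 + 1 \<and>
      norm (y - x k) powr (2 - q) < \<rho> * e / (2 * n0) \<and>
      2 * e * norm (y - x k) powr (q - 1) + 2 * (S0 + 1) * norm (y - x k) < n0 / 2"
    unfolding eventually_at by blast
  show ?thesis
  proof (intro exI[of _ d] conjI allI impI d)
    fix y assume y: "y \<notin> data \<and> dist y (x k) < d"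
    have yk: "y \<noteq> x k" using y k by auto
    note P = dP[OF yk conjunct2[OF y]]
    define r where "r = norm (y - x k)"
    have r: "0 < r" using yk unfolding r_def by simp
    have dy: "dist y (x k) = r" unfolding r_def by (simp add: dist_norm)
    have fin: "finite {..<m}" "k \<in> {..<m}" using k by auto
    have wk: "w k y = e * r powr (q - 2)" unfolding w_def e_def r_def by simp
    have WS: "W y = w k y + S y" unfolding W_def S_def K_def using sum.remove[OF fin] by simp
    have S_nn: "0 \<le> S y" unfolding S_def K_def using w_nonneg by (intro sum_nonneg) auto
    have Wp: "0 < W y" using W_pos conjunct1[OF y] by simp
    have WN: "W y *\<^sub>R (T y - x k) = N y"
    proof -
      have "W y *\<^sub>R (T y - x k) = (\<Sum>i<m. w i y *\<^sub>R x i) - (\<Sum>i<m. w i y *\<^sub>R x k)"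
        using WT[OF conjunct1[OF y]] unfolding W_def by (simp add: scaleR_diff_right scaleR_sum_left)
      also have "\<dots> = (\<Sum>i<m. w i y *\<^sub>R (x i - x k))"
        by (simp add: sum_subtractf scaleR_diff_right)
      also have "\<dots> = N y"
        unfolding N_def K_def using sum.remove[OF fin, of "\<lambda>i. w i y *\<^sub>R (x i - x k)"] by simp
      finally show ?thesis .
    qed
    have dT: "dist (T y) (x k) = norm (N y) / W y"
    proof -
      have "norm (N y) = W y * norm (T y - x k)" using WN Wp by (metis abs_of_pos norm_scaleR)
      then show ?thesis using Wp by (simp add: dist_norm)
    qed
    have A: "0 < e * r powr (q - 2)" using e_pos r by simp
    have prod: "r powr (2 - q) * r powr (q - 2) = 1" using r by (simp add: powr_add[symmetric])
    have prod2: "r * r powr (q - 2) = r powr (q - 1)"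
    proof -
      have "r powr (q - 1) = r powr (1 + (q - 2))" by simp
      also have "\<dots> = r powr 1 * r powr (q - 2)" by (rule powr_add)
      finally show ?thesis using r by simp
    qed
    have h1: "r powr (2 - q) * (2 * n0) < \<rho> * e" using P n0 unfolding r_def by (simp add: pos_less_divide_eq)
    have h2: "(r powr (2 - q) * (2 * n0)) * r powr (q - 2) < (\<rho> * e) * r powr (q - 2)"
      using h1 r by (intro mult_strict_right_mono) auto
    have h3: "2 * n0 < \<rho> * (e * r powr (q - 2))"
      using h2 prod by (simp add: algebra_simps)
    have h4: "\<rho> * (e * r powr (q - 2)) \<le> \<rho> * W y"
      using WS wk S_nn rho by (intro mult_left_mono) auto
    have up: "norm (N y) / W y < \<rho>"
      using P h3 h4 Wp by (simp add: pos_divide_less_eq)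
    have h5: "2 * r * W y \<le> 2 * r * (e * r powr (q - 2) + (S0 + 1))"
      using WS wk P r by (intro mult_left_mono) (auto simp: r_def)
    have h6: "2 * r * (e * r powr (q - 2) + (S0 + 1)) = 2 * e * r powr (q - 1) + 2 * (S0 + 1) * r"
      using prod2 by (simp add: algebra_simps)
    have lo: "2 * r < norm (N y) / W y"
      using P h5 h6 Wp unfolding r_def[symmetric] by (simp add: pos_less_divide_eq)
    show "dist (T y) (x k) < \<rho>" using up dT by simp
    show "2 * dist y (x k) < dist (T y) (x k)" using lo dT dy by simp
  qed
qed

end

context qp begin

lemma coercive:
  assumes "C z \<le> B"
  shows "norm (z - x 0) \<le> max 1 (B / eta 0 powr q)"
proof -
  have e0: "0 < eta 0 powr q" using eta_pos[OF m_pos] by simp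
  have "eta 0 powr q * norm (z - x 0) powr q \<le> C z"
    unfolding Cq_def using m_pos eta_pos
    by (intro member_le_sum[of 0 "{..<m}" "\<lambda>i. eta i powr q * norm (z - x i) powr q"]) auto
  then have h: "norm (z - x 0) powr q \<le> B / eta 0 powr q"
    using assms e0 by (simp add: pos_le_divide_eq mult.commute)
  show ?thesis
  proof (cases "norm (z - x 0) \<le> 1")
    case False
    then have "norm (z - x 0) powr 1 \<le> norm (z - x 0) powr q"
      using q1 by (intro powr_mono) auto
    then show ?thesis using h False by simp
  qed simp
qed

lemma sub_compact: "compact {z. C z \<le> B}"
proof -
  have "closed {z. C z \<le> B}"
    by (rule closed_Collect_le[OF C_cont continuous_on_const])
  moreover have "bounded {z. C z \<le> B}"
  proof (rule bounded_subset[OF bounded_cball])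
    show "{z. C z \<le> B} \<subseteq> cball (x 0) (max 1 (B / eta 0 powr q))"
      using coercive by (auto simp: dist_norm norm_minus_commute)
  qed
  ultimately show ?thesis by (simp add: compact_eq_bounded_closed)
qed

lemma fixed_is_min:
  assumes M_min: "\<forall>z. C M \<le> C z" and z: "z \<notin> data" and Tz: "T z = z"
  shows "z = M"
proof -
  have "G z = 0" using G_T[OF z] Tz by simp
  then have "C z \<le> C M" by (rule G0_imp_min)
  then show ?thesis using min_unique[OF M_min] by simp
qed

lemma step_dec:
  assumes M_min: "\<forall>z. C M \<le> C z" and st: "qpwaws_step m q x eta y0 y1" and ne: "y0 \<noteq> M"
  shows "C y1 < C y0"
proof (cases "y0 \<in> data")
  case False
  then have y1: "y1 = T y0" using st unfolding qpwaws_step_def by simp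
  have "T y0 \<noteq> y0" using fixed_is_min[OF M_min False] ne by auto
  then have "0 < norm (y0 - T y0)^2" by simp
  moreover have "0 < W y0" using W_pos[OF False] .
  ultimately have "0 < q/2 * W y0 * norm (y0 - T y0)^2" using q1 by simp
  then show ?thesis using descent[OF False] y1 by simp
next
  case True
  then obtain k where k: "k < m" "y0 = x k" by auto
  then show ?thesis using st unfolding qpwaws_step_def by auto
qed

end

context qp begin

lemma converge:
  fixes y :: "nat \<Rightarrow> 'a"
  assumes M_min: "\<forall>z. C M \<le> C z"
    and iter: "\<forall>p. y p \<noteq> M \<longrightarrow> qpwaws_step m q x eta (y p) (y (Suc p))"
    and nonM: "\<forall>p. y p \<noteq> M"
  shows "y \<longlonglongrightarrow> M"
proof -
  have st: "\<And>p. qpwaws_step m q x eta (y p) (y (Suc p))" using iter nonM by blast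
  have dec: "\<And>p. C (y (Suc p)) < C (y p)" using step_dec[OF M_min st] nonM by blast
  have decl: "\<And>p p'. p < p' \<Longrightarrow> C (y p') < C (y p)"
  proof -
    fix p p' :: nat assume "p < p'"
    then have "- C (y p) < - C (y p')"
      using lift_Suc_mono_less[of "\<lambda>p. - C (y p)"] dec by force
    then show "C (y p') < C (y p)" by simp
  qed
  have decs: "decseq (\<lambda>p. C (y p))" using dec by (intro decseq_SucI less_imp_le)
  have injy: "inj y"
  proof (rule injI)
    fix a b assume ab: "y a = y b"
    show "a = b"
    proof (cases a b rule: linorder_cases)
      case less then show ?thesis using decl[OF less] ab by simp
    next
      case greater then show ?thesis using decl[OF greater] ab by simp
    qed
  qed
  have fin: "finite {p. y p \<in> data}"
    using finite_vimageI[OF finite_imageI[OF finite_lessThan] injy] by (simp add: vimage_def)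
  obtain P0 where P0: "\<And>p. P0 \<le> p \<Longrightarrow> y p \<notin> data"
  proof -
    from fin obtain b where "\<forall>n\<in>{p. y p \<in> data}. n \<le> b"
      by (auto simp: finite_nat_set_iff_bounded_le)
    then show ?thesis using that[of "Suc b"] by force
  qed
  have yT: "\<And>p. P0 \<le> p \<Longrightarrow> y (Suc p) = T (y p)" using st P0 unfolding qpwaws_step_def by blast
  have lb: "\<And>p. C M \<le> C (y p)" using M_min by blast
  obtain c where cl: "(\<lambda>p. C (y p)) \<longlonglongrightarrow> c" and cle: "\<And>p. c \<le> C (y p)"
    using decseq_convergent[OF decs, of "C M"] lb by blast
  have cM: "C M \<le> c" using LIMSEQ_le_const[OF cl] lb by blast
  define L0 where "L0 = {z. C z \<le> C (y 0)}"
  have yL0: "y p \<in> L0" for p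
    unfolding L0_def using decl[of 0 p] by (cases p) (auto intro: less_imp_le)
  have cpt: "compact L0" unfolding L0_def by (rule sub_compact)
  have c_eq: "c = C M"
  proof (rule ccontr)
    assume "c \<noteq> C M"
    then have cM': "C M < c" using cM by simp
    define S where "S = {k. k < m \<and> x k \<noteq> M}"
    have Gne: "G (x k) \<noteq> 0" if k: "k \<in> S" for k
    proof
      assume "G (x k) = 0"
      then have "C (x k) \<le> C M" by (rule G0_imp_min)
      then have "x k = M" using min_unique[OF M_min] by simp
      then show False using k by (simp add: S_def)
    qed
    define P where "P k s d \<longleftrightarrow> 0 < s \<and> 0 < d \<and> d \<le> s / 2 \<and> (\<forall>i<m. x i \<noteq> x k \<longrightarrow> s \<le> dist (x k) (x i)) \<and>
        (\<forall>z. z \<notin> data \<and> dist z (x k) < d \<longrightarrow> dist (T z) (x k) < s / 2 \<and> 2 * dist z (x k) < dist (T z) (x k))"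
      for k s d
    have ex: "\<forall>k\<in>S. \<exists>s d. P k s d"
    proof
      fix k assume k: "k \<in> S"
      have fd: "finite data" by simp
      obtain s where s: "s > 0" "\<forall>z\<in>data. z \<noteq> x k \<longrightarrow> s \<le> dist (x k) z"
        using finite_set_avoid[OF fd, of "x k"] by auto
      obtain d where d: "d > 0" "\<forall>z. z \<notin> data \<and> dist z (x k) < d \<longrightarrow> dist (T z) (x k) < s/2 \<and> 2 * dist z (x k) < dist (T z) (x k)"
        using local_est[of k "s/2"] k Gne[OF k] s(1) unfolding S_def by auto
      have "P k s (min d (s/2))" unfolding P_def using s d by auto
      then show "\<exists>s d. P k s d" by blast
    qed
    from bchoice[OF ex] obtain sep where h2: "\<forall>k\<in>S. \<exists>d. P k (sep k) d" by blast
    from bchoice[OF h2] obtain del where sd: "\<forall>k\<in>S. P k (sep k) (del k)" by blast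
    define K where "K = (L0 \<inter> {z. c \<le> C z}) - (\<Union>k\<in>S. ball (x k) (del k))"
    have Kcpt: "compact K"
      unfolding K_def
      by (intro compact_diff compact_Int_closed cpt closed_Collect_le[OF continuous_on_const C_cont] open_UN ballI open_ball)
    have Knd: "z \<notin> data" if z: "z \<in> K" for z
    proof
      assume "z \<in> data"
      then obtain i where i: "i < m" "z = x i" by auto
      show False
      proof (cases "x i = M")
        case True then show False using z cM' i unfolding K_def by auto
      next
        case False
        then have "i \<in> S" using i unfolding S_def by simp
        moreover have "0 < del i" using sd \<open>i \<in> S\<close> unfolding P_def by blast
        ultimately show False using z i unfolding K_def by auto
      qed
    qed
    have Kpos: "0 < C z - C (T z)" if z: "z \<in> K" for z
    proof -
      have ne: "z \<noteq> M" using z cM' unfolding K_def by auto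
      have "qpwaws_step m q x eta z (T z)" using Knd[OF z] unfolding qpwaws_step_def by auto
      from step_dec[OF M_min this ne] show ?thesis by simp
    qed
    have Kcont: "continuous_on K (\<lambda>z. C z - C (T z))"
    proof -
      have sub: "K \<subseteq> - data" using Knd by auto
      show ?thesis
        by (intro continuous_on_diff continuous_on_subset[OF C_cont]
            continuous_on_compose2[OF C_cont continuous_on_subset[OF T_cont sub]]) auto
    qed
    obtain \<alpha> where \<alpha>: "0 < \<alpha>" "\<And>z. z \<in> K \<Longrightarrow> \<alpha> \<le> C z - C (T z)"
    proof (cases "K = {}")
      case True then show ?thesis using that[of 1] by auto
    next
      case False
      from continuous_attains_inf[OF Kcpt False Kcont] obtain z0 where
        "z0 \<in> K" "\<forall>z\<in>K. C z0 - C (T z0) \<le> C z - C (T z)" by blast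
      then show ?thesis using that[of "C z0 - C (T z0)"] Kpos by blast
    qed
    have diff0: "(\<lambda>p. C (y p) - C (y (Suc p))) \<longlonglongrightarrow> 0"
      using tendsto_diff[OF cl LIMSEQ_Suc[OF cl]] by simp
    obtain P1 where P1: "\<And>p. P1 \<le> p \<Longrightarrow> C (y p) - C (y (Suc p)) < \<alpha>"
      using order_tendstoD(2)[OF diff0 \<alpha>(1)] unfolding eventually_sequentially by blast
    define P2 where "P2 = max P0 P1"
    have notK: "y p \<notin> K" if p: "P2 \<le> p" for p
    proof
      assume "y p \<in> K"
      then have "\<alpha> \<le> C (y p) - C (T (y p))" by (rule \<alpha>(2))
      also have "\<dots> = C (y p) - C (y (Suc p))" using yT[of p] p unfolding P2_def by simp
      also have "\<dots> < \<alpha>" using P1[of p] p unfolding P2_def by simp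
      finally show False by simp
    qed
    have inball: "\<exists>k\<in>S. dist (y p) (x k) < del k" if p: "P2 \<le> p" for p
    proof -
      have "y p \<in> L0 \<inter> {z. c \<le> C z}" using yL0 cle by simp
      then have "y p \<in> (\<Union>k\<in>S. ball (x k) (del k))" using notK[OF p] unfolding K_def by blast
      then show ?thesis by (auto simp: dist_commute)
    qed
    obtain k where k: "k \<in> S" "dist (y P2) (x k) < del k" using inball[of P2] by auto
    have Pk: "P k (sep k) (del k)" using sd k(1) by blast
    define r0 where "r0 = dist (y P2) (x k)"
    have r0: "0 < r0"
    proof -
      have "y P2 \<notin> data" using P0 unfolding P2_def by simp
      then have "y P2 \<noteq> x k" using k(1) unfolding S_def by auto
      then show ?thesis unfolding r0_def by simp
    qed
    have ind: "dist (y (P2 + n)) (x k) < del k \<and> 2^n * r0 \<le> dist (y (P2 + n)) (x k)" for n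
    proof (induct n)
      case 0 then show ?case using k unfolding r0_def by simp
    next
      case (Suc n)
      define p where "p = P2 + n"
      have pge: "P2 \<le> p" unfolding p_def by simp
      have yp: "y p \<notin> data" using P0 pge unfolding P2_def by simp
      have hyp: "dist (y p) (x k) < del k" "2^n * r0 \<le> dist (y p) (x k)" using Suc unfolding p_def by auto
      have ysuc: "y (Suc p) = T (y p)" using yT pge unfolding P2_def by simp
      have est: "dist (y (Suc p)) (x k) < sep k / 2" "2 * dist (y p) (x k) < dist (y (Suc p)) (x k)"
        using Pk yp hyp(1) ysuc unfolding P_def by auto
      obtain j where j: "j \<in> S" "dist (y (Suc p)) (x j) < del j" using inball[of "Suc p"] pge by auto
      have Pj: "P j (sep j) (del j)" using sd j(1) by blast
      have "x j = x k"
      proof (rule ccontr)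
        assume ne: "x j \<noteq> x k"
        have jm: "j < m" "k < m" using j(1) k(1) unfolding S_def by auto
        have "sep k \<le> dist (x k) (x j)" using Pk ne jm unfolding P_def by auto
        moreover have "sep j \<le> dist (x j) (x k)" using Pj ne jm unfolding P_def by auto
        moreover have "del j \<le> sep j / 2" using Pj unfolding P_def by auto
        moreover have "dist (x k) (x j) \<le> dist (y (Suc p)) (x k) + dist (y (Suc p)) (x j)"
          by (rule dist_triangle3)
        ultimately show False using est(1) j(2) by (simp add: dist_commute)
      qed
      then have "j = k" using inj j(1) k(1) unfolding S_def by (auto dest: inj_onD)
      then have "dist (y (Suc p)) (x k) < del k" using j(2) by simp
      moreover have "2 ^ Suc n * r0 \<le> dist (y (Suc p)) (x k)" using hyp(2) est(2) by simp
      ultimately show ?case unfolding p_def by simp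
    qed
    obtain n where n: "del k / r0 < 2^n" using real_arch_pow[of 2 "del k / r0"] by auto
    then have a: "del k < 2^n * r0" using r0 by (simp add: divide_less_eq)
    have b: "2^n * r0 \<le> dist (y (P2 + n)) (x k)" using ind by blast
    have c: "dist (y (P2 + n)) (x k) < del k" using ind by blast
    show False using a b c by linarith
  qed
  show "y \<longlonglongrightarrow> M"
    unfolding tendsto_iff
  proof (intro allI impI)
    fix \<epsilon> :: real assume \<epsilon>: "0 < \<epsilon>"
    define A where "A = L0 \<inter> {z. \<epsilon> \<le> dist z M}"
    have dc: "continuous_on UNIV (\<lambda>z. dist z M)" by (intro continuous_intros)
    have Acpt: "compact A" unfolding A_def
      by (intro compact_Int_closed cpt closed_Collect_le[OF continuous_on_const dc])
    show "\<forall>\<^sub>F p in sequentially. dist (y p) M < \<epsilon>"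
    proof (cases "A = {}")
      case True
      have "dist (y p) M < \<epsilon>" for p
      proof (rule ccontr)
        assume "\<not> dist (y p) M < \<epsilon>"
        then have "y p \<in> A" using yL0[of p] unfolding A_def by auto
        then show False using True by simp
      qed
      then show ?thesis by (intro always_eventually) simp
    next
      case False
      obtain z1 where z1: "z1 \<in> A" "\<forall>z\<in>A. C z1 \<le> C z"
        using continuous_attains_inf[OF Acpt False continuous_on_subset[OF C_cont]] by auto
      have "z1 \<noteq> M" using z1(1) \<epsilon> unfolding A_def by auto
      then have "C M < C z1" using min_unique[OF M_min, of z1] by force
      then have ev: "\<forall>\<^sub>F p in sequentially. C (y p) < C z1"
        using order_tendstoD(2)[OF cl[unfolded c_eq]] by blast
      show ?thesis
      proof (rule eventually_mono[OF ev])
        fix p assume "C (y p) < C z1"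
        then have "y p \<notin> A" using z1(2) by force
        then show "dist (y p) M < \<epsilon>" using yL0 unfolding A_def by auto
      qed
    qed
  qed
qed

end


theorem theorem4:
  fixes x :: "nat \<Rightarrow> 'a::euclidean_space" and eta :: "nat \<Rightarrow> real"
    and m :: nat and q :: real and M :: 'a and y :: "nat \<Rightarrow> 'a"
  assumes q: "1 < q" "q < 2"
    and distinct: "inj_on x {..<m}"
    and noncollinear: "\<not> (\<exists>a v. \<forall>i<m. \<exists>t::real. x i = a + t *\<^sub>R v)"
    and eta_pos: "\<forall>i<m. eta i > 0"
    and M_min: "\<forall>z. Cq m q x eta M \<le> Cq m q x eta z"
    and iter: "\<forall>p. y p \<noteq> M \<longrightarrow> qpwaws_step m q x eta (y p) (y (Suc p))"
  shows "((\<forall>p. y p \<noteq> M) \<longrightarrow> y \<longlonglongrightarrow> M) \<and>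
         (\<forall>p. y p = M \<longrightarrow>
            ((y p \<notin> x ` {..<m} \<and> T1 m q x eta (y p) = y p) \<or>
             (\<exists>k<m. y p = x k \<and> gradDq m q x eta k = 0)))"
proof -
  have m_pos: "0 < m"
  proof (rule ccontr)
    assume "\<not> 0 < m"
    then have "m = 0" by simp
    then show False using noncollinear by auto
  qed
  interpret qp m q x eta using q distinct eta_pos m_pos by unfold_locales auto
  have part1: "(\<forall>p. y p \<noteq> M) \<longrightarrow> y \<longlonglongrightarrow> M" using converge[OF M_min iter] by blast
  have part2: "\<forall>p. y p = M \<longrightarrow>
            ((y p \<notin> x ` {..<m} \<and> T1 m q x eta (y p) = y p) \<or>
             (\<exists>k<m. y p = x k \<and> gradDq m q x eta k = 0))"
  proof (intro allI impI)
    fix p assume yp: "y p = M"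
    have G0: "G M = 0" using min_imp_G0 M_min by blast
    show "(y p \<notin> x ` {..<m} \<and> T1 m q x eta (y p) = y p) \<or>
             (\<exists>k<m. y p = x k \<and> gradDq m q x eta k = 0)"
    proof (cases "M \<in> x ` {..<m}")
      case False
      have "(q * W M) *\<^sub>R (M - T M) = 0" using G_T[OF False] G0 by simp
      moreover have "q * W M \<noteq> 0" using W_pos[OF False] q by simp
      ultimately have "T M = M" by simp
      then show ?thesis using False yp by simp
    next
      case True
      then obtain k where k: "k < m" "M = x k" by auto
      then show ?thesis using gradDq_G[OF k(1)] G0 yp by auto
    qed
  qed
  show ?thesis using part1 part2 by blast
qed

end
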